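(* Let $\|\cdot\|$ be a URTC-norm on $\mathbb{R}^2$, and let $\phi\colon\mathbb{R}^2\to\mathbb{R}^2$ be an arbitrary map such that for all $x,y\in\mathbb{R}^2$, $\|x-y\|=1$ implies $\|\phi(x)-\phi(y)\|=1$. Then $\phi$ is an affine isometry (with respect to $\|\cdot\|$).
   Context: A norm $\|\cdot\|$ on $\mathbb{R}^2$ is called a URTC-norm (unique regular triangle constructibility) if for every $a,b\in\mathbb{R}^2$ with $\|a-b\|=1$ the system $\|a-x\|=1$, $\|b-x\|=1$ is satisfied by exactly two points $x\in\mathbb{R}^2$. *)

theory Defs
  imports "HOL-Analysis.Analysis"
begin

definition is_norm :: "(real^2 \<Rightarrow> real) \<Rightarrow> bool" where
  "is_norm N \<longleftrightarrow>
     (\<forall>x. 0 \<le> N x) \<and> (\<forall>x. N x = 0 \<longleftrightarrow> x = 0) \<and>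
     (\<forall>c x. N (c *\<^sub>R x) = \<bar>c\<bar> * N x) \<and>
     (\<forall>x y. N (x + y) \<le> N x + N y)"

definition urtc_norm :: "(real^2 \<Rightarrow> real) \<Rightarrow> bool" where
  "urtc_norm N \<longleftrightarrow> is_norm N \<and>
     (\<forall>a b. N (a - b) = 1 \<longrightarrow>
        finite {x. N (a - x) = 1 \<and> N (b - x) = 1} \<and>
        card {x. N (a - x) = 1 \<and> N (b - x) = 1} = 2)"

definition affine_isometry :: "(real^2 \<Rightarrow> real) \<Rightarrow> (real^2 \<Rightarrow> real^2) \<Rightarrow> bool" where
  "affine_isometry N \<phi> \<longleftrightarrow>
     (\<exists>L c. linear L \<and> (\<forall>x. \<phi> x = L x + c)) \<and>
     (\<forall>x y. N (\<phi> x - \<phi> y) = N (x - y))"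

end

theory Submission
  imports Defs
begin


locale nrm =
  fixes N :: "real^2 \<Rightarrow> real"
  assumes isn: "is_norm N"
begin

lemma nonneg: "0 \<le> N x" using isn unfolding is_norm_def by auto
lemma zero_iff: "N x = 0 \<longleftrightarrow> x = 0" using isn unfolding is_norm_def by auto
lemma hom: "N (c *\<^sub>R x) = \<bar>c\<bar> * N x" using isn unfolding is_norm_def by auto
lemma tri: "N (x + y) \<le> N x + N y" using isn unfolding is_norm_def by auto
lemma N0[simp]: "N 0 = 0" using zero_iff by simp
lemma Nminus: "N (- x) = N x" using hom[of "-1" x] by simp
lemma Ncomm: "N (a - b) = N (b - a)" using Nminus[of "a - b"] by simp
lemma tri_diff: "N (a - c) \<le> N (a - b) + N (b - c)"
  using tri[of "a - b" "b - c"] by simp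
lemma rev_tri: "\<bar>N x - N y\<bar> \<le> N (x - y)"
  using tri[of "x - y" y] tri[of "y - x" x] Ncomm[of x y] by auto

lemma basis2: "x = x$1 *\<^sub>R axis (1::2) (1::real) + x$2 *\<^sub>R axis (2::2) (1::real)"
  by (simp add: vec_eq_iff forall_2 axis_def)

lemma N_le: "N x \<le> (N (axis (1::2) (1::real)) + N (axis (2::2) (1::real))) * norm x"
proof -
  have "N x \<le> N (x$1 *\<^sub>R axis (1::2) (1::real)) + N (x$2 *\<^sub>R axis (2::2) (1::real))"
    using tri basis2[of x] by metis
  also have "\<dots> = \<bar>x$1\<bar> * N (axis (1::2) (1::real)) + \<bar>x$2\<bar> * N (axis (2::2) (1::real))" by (simp add: hom)
  also have "\<dots> \<le> norm x * N (axis (1::2) (1::real)) + norm x * N (axis (2::2) (1::real))"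
    by (intro add_mono mult_right_mono component_le_norm_cart nonneg)
  finally show ?thesis by (simp add: algebra_simps)
qed

lemma contN: "continuous_on UNIV N"
proof -
  define K where "K = N (axis (1::2) (1::real)) + N (axis (2::2) (1::real)) + 1"
  have K: "K > 0" unfolding K_def using nonneg[of "axis (1::2) (1::real)"] nonneg[of "axis (2::2) (1::real)"] by simp
  have L: "\<bar>N x - N y\<bar> \<le> K * dist x y" for x y
  proof -
    have "\<bar>N x - N y\<bar> \<le> N (x - y)" by (rule rev_tri)
    also have "\<dots> \<le> (N (axis (1::2) (1::real)) + N (axis (2::2) (1::real))) * norm (x - y)" by (rule N_le)
    also have "\<dots> \<le> K * norm (x - y)" unfolding K_def by (simp add: algebra_simps)
    finally show ?thesis by (simp add: dist_norm)
  qed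
  show ?thesis unfolding continuous_on_iff
  proof (intro ballI allI impI)
    fix x e assume e: "(0::real) < e"
    show "\<exists>d>0. \<forall>x'\<in>UNIV. dist x' x < d \<longrightarrow> dist (N x') (N x) < e"
    proof (intro exI[of _ "e / K"] conjI ballI impI)
      show "e / K > 0" using e K by simp
      fix x' assume "dist x' x < e / K"
      then have "K * dist x' x < e" using K by (simp add: field_simps)
      then show "dist (N x') (N x) < e" using L[of x' x] by (simp add: dist_real_def)
    qed
  qed
qed

lemma contN': "continuous_on S (\<lambda>x. N (g x))" if "continuous_on S g"
  using continuous_on_compose2[OF contN that] by simp

lemma N_ge: "\<exists>m>0. \<forall>x. m * norm x \<le> N x"
proof -
  have "compact (sphere (0::real^2) 1)" by simp
  moreover have "sphere (0::real^2) 1 \<noteq> {}" by simp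
  ultimately obtain x0 where x0: "x0 \<in> sphere 0 1" "\<forall>y\<in>sphere 0 1. N x0 \<le> N y"
    using continuous_attains_inf[of "sphere (0::real^2) 1" N] continuous_on_subset[OF contN] by blast
  have "x0 \<noteq> 0" using x0 by auto
  then have m: "N x0 > 0" using zero_iff nonneg by (metis less_eq_real_def)
  show ?thesis
  proof (intro exI[of _ "N x0"] conjI allI m)
    fix x :: "real^2"
    show "N x0 * norm x \<le> N x"
    proof (cases "x = 0")
      case True then show ?thesis by simp
    next
      case False
      then have "x /\<^sub>R norm x \<in> sphere 0 1" by simp
      then have "N x0 \<le> N (x /\<^sub>R norm x)" using x0 by blast
      also have "\<dots> = N x / norm x" by (simp add: hom divide_simps)
      finally show ?thesis using False by (simp add: field_simps)
    qed
  qed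
qed

lemma Npos: "x \<noteq> 0 \<Longrightarrow> N x > 0" using zero_iff nonneg by (metis less_eq_real_def)

definition "Sph = {x. N x = 1}"

lemma Sph_conn: "connected Sph"
proof -
  have "Sph = (\<lambda>x. x /\<^sub>R N x) ` sphere 0 1"
  proof
    show "(\<lambda>x. x /\<^sub>R N x) ` sphere 0 1 \<subseteq> Sph"
      unfolding Sph_def
    proof (clarsimp simp: hom)
      fix x :: "real^2" assume "norm x = 1"
      then have "N x > 0" using Npos by (metis norm_zero zero_neq_one)
      then show "inverse \<bar>N x\<bar> * N x = 1" by simp
    qed
    show "Sph \<subseteq> (\<lambda>x. x /\<^sub>R N x) ` sphere 0 1"
    proof
      fix y assume y: "y \<in> Sph"
      then have Ny: "N y = 1" unfolding Sph_def by auto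
      then have y0: "y \<noteq> 0" by auto
      have e1: "N (y /\<^sub>R norm y) = inverse (norm y)" using Ny by (simp add: hom)
      have e2: "(\<lambda>x. x /\<^sub>R N x) (y /\<^sub>R norm y) = y" unfolding e1 using y0 by simp
      have e3: "y /\<^sub>R norm y \<in> sphere 0 1" using y0 by simp
      show "y \<in> (\<lambda>x. x /\<^sub>R N x) ` sphere 0 1" using e2 e3 by (rule image_eqI[OF sym])
    qed
  qed
  moreover have "connected (sphere (0::real^2) 1)" by (rule connected_sphere) simp
  moreover have "continuous_on (sphere 0 1) (\<lambda>x::real^2. x /\<^sub>R N x)"
    by (intro continuous_intros contN' continuous_on_id) (auto simp: zero_iff)
  ultimately show ?thesis by (simp add: connected_continuous_image)
qed

lemma Sph_ne: "\<exists>s. N s = 1"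
proof -
  have "axis (1::2) (1::real) \<noteq> 0" by (simp add: axis_eq_0_iff)
  then have "N (axis (1::2) (1::real)) > 0" using Npos by blast
  then have "N (axis (1::2) (1::real) /\<^sub>R N (axis 1 1)) = 1" by (simp add: hom)
  then show ?thesis by blast
qed

lemma circ:
  assumes k: "0 < k" and r: "N (q - p) \<le> 2 * k"
  shows "\<exists>z. N (z - p) = k \<and> N (z - q) = k"
proof (cases "q = p")
  case True
  obtain s where "N s = 1" using Sph_ne by blast
  then show ?thesis using True k by (intro exI[of _ "p + k *\<^sub>R s"]) (simp add: hom)
next
  case False
  define r where "r = N (q - p)"
  have rp: "r > 0" unfolding r_def using False Npos by simp
  define s0 where "s0 = (q - p) /\<^sub>R r"
  define h where "h = (\<lambda>s. N (p + k *\<^sub>R s - q))"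
  have s0: "s0 \<in> Sph" "- s0 \<in> Sph" unfolding Sph_def s0_def r_def using rp r_def
    by (auto simp: hom Nminus)
  have ks0: "k *\<^sub>R s0 = (k / r) *\<^sub>R (q - p)" unfolding s0_def by (simp add: divide_inverse)
  have eq0: "p + k *\<^sub>R s0 - q = (k / r - 1) *\<^sub>R (q - p)" unfolding ks0
    by (simp add: algebra_simps)
  have h0: "h s0 = \<bar>k - r\<bar>"
  proof -
    have "h s0 = \<bar>k / r - 1\<bar> * N (q - p)" unfolding h_def eq0 by (rule hom)
    also have "\<dots> = \<bar>(k - r) / r\<bar> * r" using rp by (simp add: diff_divide_distrib r_def)
    also have "\<dots> = \<bar>k - r\<bar>" using rp by simp
    finally show ?thesis .
  qed
  have eq1: "p + k *\<^sub>R (- s0) - q = (- (k / r + 1)) *\<^sub>R (q - p)" using ks0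
    by (simp add: algebra_simps)
  have h1: "h (- s0) = k + r"
  proof -
    have "h (- s0) = \<bar>- (k / r + 1)\<bar> * N (q - p)" unfolding h_def eq1 by (rule hom)
    also have "\<dots> = (k / r + 1) * r"
    proof -
      have pos: "k / r + 1 > 0" using rp k by (simp add: add_pos_pos)
      have "\<bar>- (k / r + 1)\<bar> = k / r + 1" using pos by simp
      then show ?thesis by (simp add: r_def)
    qed
    also have "\<dots> = k + r" using rp by (simp add: distrib_right)
    finally show ?thesis .
  qed
  have "connected (h ` Sph)"
    unfolding h_def by (intro connected_continuous_image Sph_conn contN' continuous_intros)
  moreover have "\<bar>k - r\<bar> \<le> k" "k \<le> k + r" using r rp k unfolding r_def by auto
  ultimately have "k \<in> h ` Sph" using connected_contains_Icc[of "h ` Sph" "h s0" "h (-s0)"] s0 h0 h1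
    by (metis atLeastAtMost_iff image_eqI subsetD)
  then obtain s where "s \<in> Sph" "h s = k" by auto
  then show ?thesis unfolding h_def Sph_def
    by (intro exI[of _ "p + k *\<^sub>R s"]) (simp add: hom k less_imp_le)
qed

lemma decomp: "N v \<le> 2 \<Longrightarrow> \<exists>u1 u2. N u1 = 1 \<and> N u2 = 1 \<and> v = u1 + u2"
proof -
  assume "N v \<le> 2"
  then obtain z where "N (z - 0) = 1" "N (z - v) = 1" using circ[of 1 v 0] by auto
  then show ?thesis by (intro exI[of _ z] exI[of _ "v - z"]) (simp add: Ncomm)
qed

end


definition det2 :: "real^2 \<Rightarrow> real^2 \<Rightarrow> real" where
  "det2 a b = a$1 * b$2 - a$2 * b$1"

lemma det2_diff: "det2 a (a - b) = - det2 a b" by (simp add: det2_def algebra_simps)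
lemma det2_swap: "det2 b a = - det2 a b" by (simp add: det2_def algebra_simps)
lemma det2_neg: "det2 (- a) (- b) = det2 a b" by (simp add: det2_def algebra_simps)

lemma det2_par:
  assumes "det2 a b = 0" "a \<noteq> 0"
  shows "\<exists>t. b = t *\<^sub>R a"
proof (cases "a$1 = 0")
  case True
  then have a2: "a$2 \<noteq> 0" using assms(2) by (metis exhaust_2 vec_eq_iff zero_index)
  have "a$2 * b$1 = 0" using assms(1) True unfolding det2_def by simp
  then have b1: "b$1 = 0" using a2 by simp
  have "b = (b$2 / a$2) *\<^sub>R a" unfolding vec_eq_iff forall_2 using a2 b1 True by simp
  then show ?thesis by blast
next
  case False
  have "b$2 = (b$1 / a$1) * a$2"
  proof -
    have "a$1 * b$2 = a$2 * b$1" using assms(1) unfolding det2_def by simp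
    then show ?thesis using False by (simp add: field_simps)
  qed
  then have "b = (b$1 / a$1) *\<^sub>R a" unfolding vec_eq_iff forall_2 using False by simp
  then show ?thesis by blast
qed

lemma cont_det2: "continuous_on UNIV (\<lambda>p::((real^2) \<times> (real^2)). det2 (fst p) (snd p))"
  unfolding det2_def by (intro continuous_intros)

locale ur = nrm +
  assumes urtc: "urtc_norm N"
begin

lemma third:
  assumes AB: "N (A - B) = 1"
    and X: "N (A - X) = 1" "N (B - X) = 1"
    and Y: "N (A - Y) = 1" "N (B - Y) = 1"
    and XY: "X \<noteq> Y"
  shows "Y = A + B - X"
proof -
  define T where "T = {x. N (A - x) = 1 \<and> N (B - x) = 1}"
  have fin: "finite T" and c: "card T = 2" using urtc AB unfolding urtc_norm_def T_def by auto
  define X' where "X' = A + B - X"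
  have "A - X' = - (B - X)" "B - X' = - (A - X)" unfolding X'_def by (simp_all add: algebra_simps)
  then have X'T: "X' \<in> T" unfolding T_def using X Ncomm[of X B] Ncomm[of X A] by simp
  have XT: "X \<in> T" unfolding T_def using X by auto
  have "X \<noteq> X'"
  proof
    assume "X = X'"
    then have "X - B = A - X" unfolding X'_def by (simp add: algebra_simps)
    then have "A - B = 2 *\<^sub>R (A - X)" by (simp add: scaleR_2 algebra_simps)
    then have "N (A - B) = 2" using X by (simp add: hom)
    then show False using AB by simp
  qed
  then have "card {X, X'} = 2" by simp
  moreover have "{X, X'} \<subseteq> T" using X'T XT by auto
  ultimately have "{X, X'} = T" using card_subset_eq[OF fin] c by simp
  moreover have "Y \<in> T" unfolding T_def using Y by auto
  ultimately show ?thesis using XY unfolding X'_def by auto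
qed

lemma partner: "N a = 1 \<Longrightarrow> \<exists>b. N b = 1 \<and> N (a - b) = 1"
proof -
  assume a: "N a = 1"
  define T where "T = {x. N (a - x) = 1 \<and> N (0 - x) = 1}"
  have "N (a - 0) = 1" using a by simp
  then have "card T = 2" using urtc unfolding urtc_norm_def T_def by blast
  then have "T \<noteq> {}" by auto
  then obtain b where "b \<in> T" by auto
  then show ?thesis unfolding T_def by (auto simp: Nminus)
qed

lemma E_not1:
  assumes "N a = 1" "N b = 1" "N (a - b) = 1"
  shows "N (a + b) \<noteq> 1"
proof
  assume ab: "N (a + b) = 1"
  have "b \<noteq> a + b" using assms(1) by auto
  moreover have "N (a - b) = 1" "N (0 - b) = 1" "N (a - (a + b)) = 1" "N (0 - (a + b)) = 1"
    using assms ab Nminus[of b] Nminus[of "a + b"] by (auto simp del: minus_add_distrib)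
  ultimately have "a + b = a + 0 - b" using third[of a 0 b "a + b"] assms by auto
  then have "(a + b) - (a + 0 - b) = 0" by (simp only: diff_self)
  moreover have "(a + b) - (a + 0 - b) = (2::real) *\<^sub>R b" by (simp add: scaleR_2)
  ultimately have "(2::real) *\<^sub>R b = 0" by metis
  then have "b = 0" by simp
  then show False using assms by simp
qed

lemma N_ge1:
  assumes "N a = 1" "N b = 1" "N (a - b) = 1"
  shows "N (a + b) \<ge> 1"
proof -
  have "N (2 *\<^sub>R a) \<le> N (a + b) + N (a - b)" using tri[of "a + b" "a - b"]
    by (simp add: scaleR_2)
  then show ?thesis using assms by (simp add: hom)
qed

definition "Pp = {p. N (fst p) = 1 \<and> N (snd p) = 1 \<and> N (fst p - snd p) = 1 \<and> 0 \<le> det2 (fst p) (snd p)}"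

lemma Pp_compact: "compact Pp"
unfolding compact_eq_bounded_closed proof (intro conjI)
  obtain m where m: "m > 0" "\<And>x. m * norm x \<le> N x" using N_ge by blast
  have "bounded Sph" unfolding bounded_iff Sph_def
  proof (intro exI[of _ "1/m"] ballI)
    fix x assume "x \<in> {x. N x = 1}"
    then have "m * norm x \<le> 1" using m(2)[of x] by simp
    then show "norm x \<le> 1 / m" using m(1) by (simp add: field_simps)
  qed
  moreover have "Pp \<subseteq> Sph \<times> Sph" unfolding Pp_def Sph_def by auto
  ultimately show "bounded Pp" using bounded_Times bounded_subset by metis
  have c1: "continuous_on UNIV (\<lambda>p::((real^2) \<times> (real^2)). N (fst p))"
    by (intro contN' continuous_intros)
  have c2: "continuous_on UNIV (\<lambda>p::((real^2) \<times> (real^2)). N (snd p))"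
    by (intro contN' continuous_intros)
  have c3: "continuous_on UNIV (\<lambda>p::((real^2) \<times> (real^2)). N (fst p - snd p))"
    by (intro contN' continuous_intros)
  show "closed Pp" unfolding Pp_def
    by (intro closed_Collect_conj closed_Collect_eq closed_Collect_le c1 c2 c3 cont_det2 continuous_on_const)
qed

lemma Pp_conn: "connected Pp"
proof -
  have inj: "inj_on fst Pp"
  proof (rule inj_onI)
    fix p q assume p: "p \<in> Pp" and q: "q \<in> Pp" and e: "fst p = fst q"
    obtain a b1 where pa: "p = (a, b1)" by (cases p)
    obtain b2 where qa: "q = (a, b2)" using e pa by (cases q) auto
    show "p = q"
    proof (rule ccontr)
      assume "p \<noteq> q"
      then have ne: "b1 \<noteq> b2" using pa qa by auto
      have h: "N a = 1" "N b1 = 1" "N (a - b1) = 1" "0 \<le> det2 a b1"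
              "N b2 = 1" "N (a - b2) = 1" "0 \<le> det2 a b2"
        using p q pa qa unfolding Pp_def by auto
      have "b2 = a + 0 - b1" using third[of a 0 b1 b2] h ne by (auto simp: Nminus)
      then have "det2 a b2 = - det2 a b1" using det2_diff by simp
      then have "det2 a b1 = 0" using h by simp
      moreover have "a \<noteq> 0" using h by auto
      ultimately obtain t where t: "b1 = t *\<^sub>R a" using det2_par by blast
      have "\<bar>t\<bar> = 1" using h t by (simp add: hom)
      moreover have "a - b1 = (1 - t) *\<^sub>R a" using t by (simp add: algebra_simps)
      then have "\<bar>1 - t\<bar> = 1" using h by (simp add: hom)
      ultimately show False by auto
    qed
  qed
  have img: "fst ` Pp = Sph"
  proof
    show "fst ` Pp \<subseteq> Sph" unfolding Pp_def Sph_def by auto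
    show "Sph \<subseteq> fst ` Pp"
    proof
      fix a assume "a \<in> Sph"
      then have a: "N a = 1" unfolding Sph_def by auto
      then obtain b where b: "N b = 1" "N (a - b) = 1" using partner by blast
      show "a \<in> fst ` Pp"
      proof (cases "0 \<le> det2 a b")
        case True
        then have "(a, b) \<in> Pp" unfolding Pp_def using a b by auto
        then show ?thesis by force
      next
        case False
        have "N (a - (a - b)) = 1" using b by simp
        then have "(a, a - b) \<in> Pp" unfolding Pp_def using a b False det2_diff[of a b] by auto
        then show ?thesis by force
      qed
    qed
  qed
  obtain g where "homeomorphism Pp Sph fst g"
    using homeomorphism_compact[OF Pp_compact _ img inj] continuous_on_fst continuous_on_id by blast
  then have "continuous_on Sph g" "g ` Sph = Pp" unfolding homeomorphism_def by auto
  then show ?thesis using connected_continuous_image[OF _ Sph_conn] by metis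
qed

lemma E_conn:
  assumes "N a = 1" "N b = 1" "N (a - b) = 1"
  shows "\<exists>a' b'. N a' = 1 \<and> N b' = 1 \<and> N (a' - b') = 1 \<and> N (a' + b' - (a + b)) = 1"
proof -
  obtain a0 b0 where ab0: "(a0, b0) \<in> Pp" "a0 + b0 = a + b"
  proof (cases "0 \<le> det2 a b")
    case True then show ?thesis using that[of a b] assms unfolding Pp_def by auto
  next
    case False
    have "N (b - a) = 1" using assms Ncomm[of b a] by simp
    moreover have "0 \<le> det2 b a" using False det2_swap[of a b] by simp
    ultimately have "(b, a) \<in> Pp" unfolding Pp_def using assms by simp
    then show ?thesis using that[of b a] by (simp add: add.commute)
  qed
  have ab0': "(- a0, - b0) \<in> Pp" using ab0 Ncomm[of b0 a0] unfolding Pp_def by (auto simp: Nminus det2_neg)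
  define w where "w = a + b"
  define k where "k = (\<lambda>p::((real^2) \<times> (real^2)). N (fst p + snd p - w))"
  have "connected (k ` Pp)" unfolding k_def
    by (intro connected_continuous_image Pp_conn contN' continuous_intros)
  moreover have "k (a0, b0) = 0" unfolding k_def w_def using ab0 by simp
  moreover have "k (- a0, - b0) = 2 * N w"
  proof -
    have e: "- a0 + - b0 - w = (-2) *\<^sub>R w" using ab0 unfolding w_def by (simp add: algebra_simps scaleR_2)
    have "k (- a0, - b0) = N ((-2) *\<^sub>R w)" unfolding k_def by (simp only: fst_conv snd_conv e)
    also have "\<dots> = 2 * N w" by (rule trans[OF hom]) simp
    finally show ?thesis .
  qed
  moreover have "k (a0, b0) \<in> k ` Pp" using ab0(1) by (rule imageI)
  moreover have "k (- a0, - b0) \<in> k ` Pp" using ab0' by (rule imageI)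
  ultimately have sub: "{0 .. 2 * N w} \<subseteq> k ` Pp"
    using connected_contains_Icc[of "k ` Pp" "k (a0, b0)" "k (- a0, - b0)"] by simp
  moreover have "N w \<ge> 1" unfolding w_def using N_ge1 assms by simp
  ultimately have "1 \<in> k ` Pp" by auto
  then obtain p where "p \<in> Pp" "k p = 1" by auto
  then show ?thesis unfolding Pp_def k_def w_def by auto
qed

end


locale um = ur +
  fixes f :: "real^2 \<Rightarrow> real^2"
  assumes pres: "\<And>x y. N (x - y) = 1 \<Longrightarrow> N (f x - f y) = 1"
begin

lemma rhombus_gen:
  assumes a: "N a = 1" and b: "N b = 1" and ab: "N (a - b) = 1"
  shows "f (p + a + b) = f p \<or> f (p + a + b) = f (p + a) + f (p + b) - f p"
proof (cases "f (p + a + b) = f p")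
  case True then show ?thesis by blast
next
  case False
  then have ne: "f p \<noteq> f (p + a + b)" by simp
  have 1: "N (f (p + a) - f (p + b)) = 1" using ab by (intro pres) simp
  have 2: "N (f (p + a) - f p) = 1" using a by (intro pres) simp
  have 3: "N (f (p + b) - f p) = 1" using b by (intro pres) simp
  have "(p + a) - (p + a + b) = - b" by simp
  then have 4: "N (f (p + a) - f (p + a + b)) = 1" using b Nminus[of b] by (intro pres) simp
  have "(p + b) - (p + a + b) = - a" by simp
  then have 5: "N (f (p + b) - f (p + a + b)) = 1" using a Nminus[of a] by (intro pres) simp
  show ?thesis using third[OF 1 2 3 4 5 ne] by blast
qed

lemma noncollapse:
  assumes a: "N a = 1" and b: "N b = 1" and ab: "N (a - b) = 1"
  shows "f (p + a + b) \<noteq> f p"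
proof
  assume col: "f (p + a + b) = f p"
  obtain a' b' where a': "N a' = 1" "N b' = 1" "N (a' - b') = 1" "N (a' + b' - (a + b)) = 1"
    using E_conn[OF a b ab] by blast
  have eq: "(p + a' + b') - (p + a + b) = a' + b' - (a + b)" by (simp add: algebra_simps)
  have "N ((p + a' + b') - (p + a + b)) = 1" unfolding eq by (rule a'(4))
  then have "N (f (p + a' + b') - f (p + a + b)) = 1" by (rule pres)
  then have z: "N (f (p + a' + b') - f p) = 1" using col by simp
  show False
  proof (cases "f (p + a' + b') = f p")
    case True then show False using z by simp
  next
    case False
    then have e: "f (p + a' + b') = f (p + a') + f (p + b') - f p" using rhombus_gen[OF a'(1-3)] by blast
    define A where "A = f (p + a') - f p"
    define B where "B = f (p + b') - f p"
    have "N A = 1" unfolding A_def using a' by (intro pres) simp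
    moreover have "N B = 1" unfolding B_def using a' by (intro pres) simp
    moreover have "N (A - B) = 1" unfolding A_def B_def using a' by (simp, intro pres) simp
    ultimately have "N (A + B) \<noteq> 1" by (rule E_not1)
    moreover have "A + B = f (p + a' + b') - f p" unfolding A_def B_def e by simp
    ultimately show False using z by simp
  qed
qed

lemma rhombus:
  assumes "N a = 1" "N b = 1" "N (a - b) = 1"
  shows "f (p + a + b) = f (p + a) + f (p + b) - f p"
  using rhombus_gen[OF assms] noncollapse[OF assms] by blast

lemma line2:
  assumes a: "N a = 1"
  shows "f (p + 2 *\<^sub>R a) = 2 *\<^sub>R f (p + a) - f p"
proof -
  obtain b where b: "N b = 1" "N (a - b) = 1" using partner[OF a] by blast
  have R1: "f (p + a + b) = f (p + a) + f (p + b) - f p" using rhombus[OF a b] .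
  have "N (a - (a - b)) = 1" using b by simp
  then have R2: "f ((p + b) + a + (a - b)) = f ((p + b) + a) + f ((p + b) + (a - b)) - f (p + b)"
    using rhombus[OF a b(2)] by blast
  have e1: "(p + b) + a + (a - b) = p + 2 *\<^sub>R a" by (simp add: algebra_simps scaleR_2)
  have e2: "(p + b) + a = p + a + b" by (simp add: algebra_simps)
  have e3: "(p + b) + (a - b) = p + a" by (simp add: algebra_simps)
  have "f (p + 2 *\<^sub>R a) = f (p + a + b) + f (p + a) - f (p + b)" using R2 unfolding e1 unfolding e2 e3 .
  also have "\<dots> = 2 *\<^sub>R f (p + a) - f p" unfolding R1 scaleR_2 by (simp add: algebra_simps)
  finally show ?thesis .
qed

lemma linen:
  assumes a: "N a = 1"
  shows "f (p + real n *\<^sub>R a) = f p + real n *\<^sub>R (f (p + a) - f p)"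
proof -
  define D where "D = f (p + a) - f p"
  have "f (p + real n *\<^sub>R a) = f p + real n *\<^sub>R D \<and>
        f (p + real (Suc n) *\<^sub>R a) = f p + real (Suc n) *\<^sub>R D"
  proof (induction n)
    case 0 then show ?case unfolding D_def by simp
  next
    case (Suc n)
    define q where "q = p + real n *\<^sub>R a"
    have "f (q + 2 *\<^sub>R a) = 2 *\<^sub>R f (q + a) - f q" by (rule line2[OF a])
    moreover have "q + 2 *\<^sub>R a = p + real (Suc (Suc n)) *\<^sub>R a" unfolding q_def
      by (simp add: algebra_simps)
    moreover have "q + a = p + real (Suc n) *\<^sub>R a" unfolding q_def by (simp add: algebra_simps)
    ultimately have "f (p + real (Suc (Suc n)) *\<^sub>R a) = 2 *\<^sub>R f (p + real (Suc n) *\<^sub>R a) - f q"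
      by simp
    also have "\<dots> = f p + real (Suc (Suc n)) *\<^sub>R D"
    proof -
      have "f q = f p + real n *\<^sub>R D" "f (p + real (Suc n) *\<^sub>R a) = f p + real (Suc n) *\<^sub>R D"
        using Suc.IH unfolding q_def by auto
      moreover have "real (Suc (Suc n)) = real n + 1 + 1" "real (Suc n) = real n + 1" by simp_all
      ultimately show ?thesis unfolding scaleR_2 by (simp only: scaleR_add_left scaleR_one) (simp add: algebra_simps)
    qed
    finally show ?case using Suc.IH by simp
  qed
  then show ?thesis unfolding D_def by simp
qed

lemma distn:
  assumes a: "N a = 1"
  shows "N (f (p + real n *\<^sub>R a) - f p) = real n"
proof -
  have "N (f (p + a) - f p) = 1" using a by (intro pres) simp
  then show ?thesis using linen[OF a, of p n] by (simp add: hom)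
qed

lemma coarse: "N (f p - f q) \<le> 2 * N (p - q) + 4"
proof -
  define k where "k = nat \<lceil>N (q - p)\<rceil> + 1"
  have k1: "real k \<ge> N (q - p)" "real k \<ge> 1" "real k \<le> N (q - p) + 2" unfolding k_def
    using nonneg[of "q - p"] by linarith+
  obtain z where z: "N (z - p) = real k" "N (z - q) = real k"
    using circ[of "real k" q p] k1 by auto
  have k0: "real k > 0" using k1 by simp
  define s where "s = (z - p) /\<^sub>R real k"
  have s: "N s = 1" unfolding s_def using z k0 by (simp add: hom)
  have zp: "z = p + real k *\<^sub>R s" unfolding s_def using k0 by simp
  define t where "t = (z - q) /\<^sub>R real k"
  have t: "N t = 1" unfolding t_def using z k0 by (simp add: hom)
  have zq: "z = q + real k *\<^sub>R t" unfolding t_def using k0 by simp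
  have d1: "N (f z - f p) = real k" using distn[OF s, of p k] zp by simp
  have d2: "N (f z - f q) = real k" using distn[OF t, of q k] zq by simp
  have "N (f p - f q) \<le> N (f p - f z) + N (f z - f q)" by (rule tri_diff)
  also have "\<dots> = 2 * real k" using d1 d2 Ncomm[of "f p" "f z"] by simp
  also have "\<dots> \<le> 2 * N (p - q) + 4" using k1 Ncomm[of q p] by simp
  finally show ?thesis .
qed

lemma const:
  assumes u: "N u = 1"
  shows "f (x + u) - f x = f (y + u) - f y"
proof (rule ccontr)
  define d where "d = (f (x + u) - f x) - (f (y + u) - f y)"
  assume "f (x + u) - f x \<noteq> f (y + u) - f y"
  then have "d \<noteq> 0" unfolding d_def by simp
  then have dp: "N d > 0" by (rule Npos)
  define M where "M = 2 * N (x - y) + 4 + N (f x - f y)"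
  obtain n where n: "M / N d < real n" using reals_Archimedean2 by blast
  have e: "f (x + real n *\<^sub>R u) - f (y + real n *\<^sub>R u) = (f x - f y) + real n *\<^sub>R d"
    unfolding linen[OF u] d_def by (simp add: algebra_simps)
  have "N (f (x + real n *\<^sub>R u) - f (y + real n *\<^sub>R u)) \<le> 2 * N (x - y) + 4"
    using coarse[of "x + real n *\<^sub>R u" "y + real n *\<^sub>R u"] by simp
  moreover have "N (real n *\<^sub>R d) \<le> N (f (x + real n *\<^sub>R u) - f (y + real n *\<^sub>R u)) + N (f x - f y)"
  proof -
    have "real n *\<^sub>R d = (f (x + real n *\<^sub>R u) - f (y + real n *\<^sub>R u)) + - (f x - f y)"
      unfolding e by simp
    then show ?thesis using tri[of "f (x + real n *\<^sub>R u) - f (y + real n *\<^sub>R u)" "- (f x - f y)"]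
      Nminus[of "f x - f y"] by metis
  qed
  ultimately have "real n * N d \<le> M" unfolding M_def by (simp add: hom)
  moreover have "M < real n * N d" using n dp by (simp add: field_simps)
  ultimately show False by simp
qed

definition "G w = f w - f 0"

lemma shift_unit:
  assumes u: "N u = 1"
  shows "f (x + real n *\<^sub>R u) = f x + real n *\<^sub>R G u"
  using linen[OF u, of x n] const[OF u, of x 0] unfolding G_def by simp

lemma shift: "f (x + w) = f x + G w"
proof -
  define n where "n = nat \<lceil>N w\<rceil> + 1"
  have n1: "real n \<ge> N w" "real n \<ge> 1" unfolding n_def using nonneg[of w] by linarith+
  define v where "v = w /\<^sub>R real n"
  have "N v \<le> 2" unfolding v_def using n1 by (simp add: hom divide_simps)
  then obtain u1 u2 where u: "N u1 = 1" "N u2 = 1" "v = u1 + u2" using decomp by blast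
  have "w = real n *\<^sub>R v" unfolding v_def using n1 by simp
  then have w: "w = real n *\<^sub>R u1 + real n *\<^sub>R u2" using u(3) by (simp add: scaleR_add_right)
  have gen: "f (y + w) = f y + real n *\<^sub>R G u1 + real n *\<^sub>R G u2" for y
  proof -
    have "f (y + w) = f ((y + real n *\<^sub>R u1) + real n *\<^sub>R u2)" unfolding w by (simp add: add.assoc)
    also have "\<dots> = f y + real n *\<^sub>R G u1 + real n *\<^sub>R G u2" unfolding shift_unit[OF u(2)] shift_unit[OF u(1)] ..
    finally show ?thesis .
  qed
  show ?thesis using gen[of x] gen[of 0] unfolding G_def by simp
qed

lemma G_add: "G (v + w) = G v + G w"
  using shift[of v w] unfolding G_def by simp

lemma G0: "G 0 = 0" unfolding G_def by simp

lemma G_nat: "G (real m *\<^sub>R w) = real m *\<^sub>R G w"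
proof (induction m)
  case 0 then show ?case using G0 by simp
next
  case (Suc m)
  have "real (Suc m) *\<^sub>R w = w + real m *\<^sub>R w" by (simp add: algebra_simps)
  then show ?case using G_add Suc.IH by (simp add: algebra_simps)
qed

lemma G_neg: "G (- w) = - G w"
proof -
  have "G w + G (- w) = 0" using G_add[of w "- w"] G0 by simp
  then show ?thesis by (metis add.commute eq_neg_iff_add_eq_0)
qed

lemma G_int: "G (real_of_int z *\<^sub>R w) = real_of_int z *\<^sub>R G w"
proof (cases "z \<ge> 0")
  case True
  then obtain m where "z = int m" by (metis nonneg_eq_int)
  then show ?thesis using G_nat by simp
next
  case False
  then obtain m where "z = - int m" by (metis neg_0_le_iff_le nonneg_eq_int linear minus_minus)
  then show ?thesis using G_nat[of m w] G_neg[of "real m *\<^sub>R w"] by simp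
qed

lemma G_rat: "q \<in> \<rat> \<Longrightarrow> G (q *\<^sub>R w) = q *\<^sub>R G w"
proof -
  assume "q \<in> \<rat>"
  then obtain a b where ab: "b > 0" "q = of_int a / of_int b" by (rule Rats_cases')
  have "real_of_int b *\<^sub>R G (q *\<^sub>R w) = G (real_of_int b *\<^sub>R (q *\<^sub>R w))" by (rule G_int[symmetric])
  also have "real_of_int b *\<^sub>R (q *\<^sub>R w) = real_of_int a *\<^sub>R w" using ab by simp
  also have "G \<dots> = real_of_int a *\<^sub>R G w" by (rule G_int)
  finally have "real_of_int b *\<^sub>R G (q *\<^sub>R w) = real_of_int a *\<^sub>R G w" .
  then have "inverse (real_of_int b) *\<^sub>R (real_of_int b *\<^sub>R G (q *\<^sub>R w)) =
     inverse (real_of_int b) *\<^sub>R (real_of_int a *\<^sub>R G w)" by simp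
  then have "G (q *\<^sub>R w) = (real_of_int a / real_of_int b) *\<^sub>R G w" using ab(1)
    by (simp add: divide_inverse mult.commute)
  then show ?thesis using ab by simp
qed

lemma G_unit: "N u = 1 \<Longrightarrow> N (G u) = 1"
  unfolding G_def by (rule pres) simp

lemma G_lip: "N (G w) \<le> 2 * N w"
proof (rule ccontr)
  assume "\<not> ?thesis"
  then have ep: "N (G w) - 2 * N w > 0" by simp
  obtain m where m: "4 / (N (G w) - 2 * N w) < real m" using reals_Archimedean2 by blast
  have "N (G (real m *\<^sub>R w)) \<le> 2 * N (real m *\<^sub>R w) + 4"
    using coarse[of "real m *\<^sub>R w" 0] unfolding G_def by simp
  then have "real m * N (G w) \<le> 2 * (real m * N w) + 4" by (simp add: G_nat hom)
  moreover have "4 < real m * (N (G w) - 2 * N w)" using m ep by (simp add: field_simps)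
  ultimately show False by (simp add: algebra_simps)
qed

lemma G_scale: "G (t *\<^sub>R v) = t *\<^sub>R G v"
proof -
  define C where "C = 2 * N v + N (G v) + 1"
  have C: "C > 0" unfolding C_def using nonneg[of v] nonneg[of "G v"] by simp
  have "N (G (t *\<^sub>R v) - t *\<^sub>R G v) \<le> e" if e: "e > 0" for e
  proof -
    obtain q where q: "q \<in> \<rat>" "t - e / C < q" "q < t + e / C"
      using Rats_dense_in_real[of "t - e / C" "t + e / C"] e C by auto
    have tq: "\<bar>t - q\<bar> \<le> e / C" using q by simp
    have "G (t *\<^sub>R v) = G ((t - q) *\<^sub>R v) + G (q *\<^sub>R v)"
      using G_add[of "(t - q) *\<^sub>R v" "q *\<^sub>R v"] by (simp add: scaleR_diff_left)
    then have "G (t *\<^sub>R v) - t *\<^sub>R G v = G ((t - q) *\<^sub>R v) + (q - t) *\<^sub>R G v"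
      using G_rat[OF q(1)] by (simp add: algebra_simps)
    then have "N (G (t *\<^sub>R v) - t *\<^sub>R G v) \<le> N (G ((t - q) *\<^sub>R v)) + N ((q - t) *\<^sub>R G v)"
      using tri by simp
    also have "\<dots> \<le> 2 * (\<bar>t - q\<bar> * N v) + \<bar>t - q\<bar> * N (G v)"
      using G_lip[of "(t - q) *\<^sub>R v"] by (simp add: hom abs_minus_commute)
    also have "\<dots> \<le> \<bar>t - q\<bar> * C" unfolding C_def by (simp add: algebra_simps)
    also have "\<dots> \<le> e / C * C" using tq C by (intro mult_right_mono) auto
    also have "\<dots> = e" using C by simp
    finally show ?thesis .
  qed
  then have "N (G (t *\<^sub>R v) - t *\<^sub>R G v) \<le> 0"
    by (metis dense not_le)
  then have "N (G (t *\<^sub>R v) - t *\<^sub>R G v) = 0" using nonneg by (metis antisym)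
  then show ?thesis using zero_iff by simp
qed

lemma G_linear: "linear G"
  by (rule linearI) (simp_all add: G_add G_scale)

lemma G_iso: "N (G v) = N v"
proof (cases "v = 0")
  case True then show ?thesis using G0 by simp
next
  case False
  then have np: "N v > 0" by (rule Npos)
  define u where "u = v /\<^sub>R N v"
  have u: "N u = 1" unfolding u_def using np by (simp add: hom)
  have "v = N v *\<^sub>R u" unfolding u_def using np by simp
  then have "G v = N v *\<^sub>R G u" using G_scale by metis
  then show ?thesis using G_unit[OF u] np by (simp add: hom)
qed

lemma result: "affine_isometry N f"
  unfolding affine_isometry_def
proof (intro conjI exI allI)
  show "linear G" by (rule G_linear)
  fix x show "f x = G x + f 0" unfolding G_def by simp
next
  fix x y
  have "f x - f y = G (x - y)" using shift[of y "x - y"] by simp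
  then show "N (f x - f y) = N (x - y)" using G_iso by simp
qed

end


theorem theorem1:
  fixes N :: "real^2 \<Rightarrow> real" and \<phi> :: "real^2 \<Rightarrow> real^2"
  assumes "urtc_norm N"
    and "\<And>x y. N (x - y) = 1 \<Longrightarrow> N (\<phi> x - \<phi> y) = 1"
  shows "affine_isometry N \<phi>"
proof -
  have "is_norm N" using assms(1) unfolding urtc_norm_def by simp
  then interpret um N \<phi>
    using assms by unfold_locales auto
  show ?thesis by (rule result)
qed

end
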